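(* Let $\Omega$ be a metric space, $E$ a non-trivial locally convex Hausdorff space over $\mathbb{K}$ and $\mathcal{FV}(\Omega)$ a dom-space such that $\mathcal{FV}(\Omega)\subset\mathcal{CC}(\Omega)$ as a linear subspace. If the map $\delta\colon\Omega\to\mathcal{FV}(\Omega)'_\kappa$, $x\mapsto\delta_x$, is Cauchy continuous, then $S(u)\in\mathcal{CC}(\Omega,E)$ for all $u\in\mathcal{FV}(\Omega)\varepsilon E$.
   Context: $\mathbb{K}\in\{\mathbb{R},\mathbb{C}\}$. A map from a metric space into a metric space or a locally convex space is Cauchy continuous if it maps Cauchy sequences to Cauchy sequences; $\mathcal{CC}(\Omega,E)$ denotes the Cauchy continuous maps $\Omega\to E$, $\mathcal{CC}(\Omega):=\mathcal{CC}(\Omega,\mathbb{K})$. Framework: $J,M$ non-empty index sets, $(\omega_m)_{m\in M}$ non-empty sets, $\nu_{j,m}\colon\omega_m\to[0,\infty)$ such that for all $m$, $x\in\omega_m$ some $\nu_{j,m}(x)>0$; $\operatorname{AP}(\Omega)\subset\mathbb{K}^\Omega$ a linear subspace; $T_m\colon\operatorname{dom}T_m\to\mathbb{K}^{\omega_m}$ linear maps on linear subspaces of $\mathbb{K}^\Omega$; $\mathcal{FV}(\Omega):=\{f\in\operatorname{AP}(\Omega)\cap\bigcap_m\operatorname{dom}T_m: |f|_{j,m}:=\sup_{x\in\omega_m}|T_m(f)(x)|\nu_{j,m}(x)<\infty\ \forall j,m\}$ with these seminorms. It is a dom-space if it is Hausdorff, the seminorms are directed and every $\delta_x\colon f\mapsto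 f(x)$ belongs to $\mathcal{FV}(\Omega)'$. $\mathcal{FV}(\Omega)'_\kappa$: dual with the topology of uniform convergence on absolutely convex compact subsets of $\mathcal{FV}(\Omega)$. $\mathcal{FV}(\Omega)\varepsilon E$: continuous linear maps $\mathcal{FV}(\Omega)'_\kappa\to E$ with the topology of uniform convergence on equicontinuous sets; $S(u)(x):=u(\delta_x)$. *)

theory Defs
  imports "HOL-Analysis.Analysis"
begin

definition lin_subspace :: "('a \<Rightarrow> 'k::real_normed_field) set \<Rightarrow> bool" where
  "lin_subspace S \<longleftrightarrow> (\<lambda>x. 0) \<in> S \<and> (\<forall>f\<in>S. \<forall>g\<in>S. (\<lambda>x. f x + g x) \<in> S)
     \<and> (\<forall>c. \<forall>f\<in>S. (\<lambda>x. c * f x) \<in> S)"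

definition lin_map_on :: "('a \<Rightarrow> 'k::real_normed_field) set \<Rightarrow> (('a \<Rightarrow> 'k) \<Rightarrow> ('w \<Rightarrow> 'k)) \<Rightarrow> bool" where
  "lin_map_on S T \<longleftrightarrow> (\<forall>f\<in>S. \<forall>g\<in>S. T (\<lambda>x. f x + g x) = (\<lambda>w. T f w + T g w))
     \<and> (\<forall>c. \<forall>f\<in>S. T (\<lambda>x. c * f x) = (\<lambda>w. c * T f w))"

definition FV :: "('a \<Rightarrow> 'k::real_normed_field) set \<Rightarrow> ('m \<Rightarrow> ('a \<Rightarrow> 'k) set)
    \<Rightarrow> ('m \<Rightarrow> ('a \<Rightarrow> 'k) \<Rightarrow> 'w \<Rightarrow> 'k) \<Rightarrow> ('m \<Rightarrow> 'w set) \<Rightarrow> ('j \<Rightarrow> 'm \<Rightarrow> 'w \<Rightarrow> real)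
    \<Rightarrow> ('a \<Rightarrow> 'k) set" where
  "FV AP domT T \<omega> \<nu> = {f. f \<in> AP \<and> (\<forall>m. f \<in> domT m)
      \<and> (\<forall>j m. bdd_above ((\<lambda>x. norm (T m f x) * \<nu> j m x) ` \<omega> m))}"

definition fv_seminorm :: "('m \<Rightarrow> ('a \<Rightarrow> 'k::real_normed_field) \<Rightarrow> 'w \<Rightarrow> 'k) \<Rightarrow> ('m \<Rightarrow> 'w set)
    \<Rightarrow> ('j \<Rightarrow> 'm \<Rightarrow> 'w \<Rightarrow> real) \<Rightarrow> 'j \<Rightarrow> 'm \<Rightarrow> ('a \<Rightarrow> 'k) \<Rightarrow> real" where
  "fv_seminorm T \<omega> \<nu> j m f = (SUP x\<in>\<omega> m. norm (T m f x) * \<nu> j m x)"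

definition fv_seminorms :: "('m \<Rightarrow> ('a \<Rightarrow> 'k::real_normed_field) \<Rightarrow> 'w \<Rightarrow> 'k) \<Rightarrow> ('m \<Rightarrow> 'w set)
    \<Rightarrow> ('j \<Rightarrow> 'm \<Rightarrow> 'w \<Rightarrow> real) \<Rightarrow> (('a \<Rightarrow> 'k) \<Rightarrow> real) set" where
  "fv_seminorms T \<omega> \<nu> = {fv_seminorm T \<omega> \<nu> j m | j m. True}"

text \<open>Continuity of a linear map between spaces whose topologies are generated by families
  of seminorms P (on the domain X) and Q (on the codomain).\<close>

definition sn_cont :: "'x set \<Rightarrow> ('x \<Rightarrow> real) set \<Rightarrow> ('y \<Rightarrow> real) set \<Rightarrow> ('x \<Rightarrow> 'y) \<Rightarrow> bool" where
  "sn_cont X P Q u \<longleftrightarrow> (\<forall>q\<in>Q. \<exists>F C. finite F \<and> F \<subseteq> P \<and> C \<ge> 0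
      \<and> (\<forall>y\<in>X. q (u y) \<le> C * (\<Sum>p\<in>F. p y)))"

definition fun_sn_topology :: "('x \<Rightarrow> 'k::real_normed_field) set \<Rightarrow> (('x \<Rightarrow> 'k) \<Rightarrow> real) set
    \<Rightarrow> ('x \<Rightarrow> 'k) topology" where
  "fun_sn_topology X Q = topology_generated_by
     {{g \<in> X. q (\<lambda>x. g x - f x) < e} | q f e. q \<in> Q \<and> f \<in> X \<and> e > 0}"

definition abs_convex :: "('x \<Rightarrow> 'k::real_normed_field) set \<Rightarrow> bool" where
  "abs_convex K \<longleftrightarrow> (\<forall>f\<in>K. \<forall>g\<in>K. \<forall>a b. norm a + norm b \<le> 1 \<longrightarrow> (\<lambda>x. a * f x + b * g x) \<in> K)"

definition fun_sn_Cauchy :: "(('x \<Rightarrow> 'k::real_normed_field) \<Rightarrow> real) set \<Rightarrow> (nat \<Rightarrow> 'x \<Rightarrow> 'k) \<Rightarrow> bool" where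
  "fun_sn_Cauchy Q Y \<longleftrightarrow> (\<forall>q\<in>Q. \<forall>e>0. \<exists>N. \<forall>m\<ge>N. \<forall>n\<ge>N. q (\<lambda>x. Y m x - Y n x) < e)"

text \<open>Dual space FV(Omega)' (functionals extended by zero outside FV(Omega)).\<close>

definition fv_dual :: "('a \<Rightarrow> 'k::real_normed_field) set \<Rightarrow> (('a \<Rightarrow> 'k) \<Rightarrow> real) set
    \<Rightarrow> (('a \<Rightarrow> 'k) \<Rightarrow> 'k) set" where
  "fv_dual X Q = {y. (\<forall>f. f \<notin> X \<longrightarrow> y f = 0)
      \<and> (\<forall>f\<in>X. \<forall>g\<in>X. y (\<lambda>x. f x + g x) = y f + y g)
      \<and> (\<forall>c. \<forall>f\<in>X. y (\<lambda>x. c * f x) = c * y f)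
      \<and> sn_cont X Q {norm} y}"

definition kappa_seminorms :: "('a \<Rightarrow> 'k::real_normed_field) set \<Rightarrow> (('a \<Rightarrow> 'k) \<Rightarrow> real) set
    \<Rightarrow> ((('a \<Rightarrow> 'k) \<Rightarrow> 'k) \<Rightarrow> real) set" where
  "kappa_seminorms X Q = {(\<lambda>y. Sup (insert 0 ((\<lambda>f. norm (y f)) ` K))) | K.
      K \<subseteq> X \<and> abs_convex K \<and> compactin (fun_sn_topology X Q) K}"

definition point_eval :: "('a \<Rightarrow> 'k::real_normed_field) set \<Rightarrow> 'a \<Rightarrow> ('a \<Rightarrow> 'k) \<Rightarrow> 'k" where
  "point_eval X x = (\<lambda>f. if f \<in> X then f x else 0)"

text \<open>Locally convex Hausdorff space E over K: a K-module with a separating family of seminorms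
  generating its topology.\<close>

definition lcHs :: "('k::real_normed_field \<Rightarrow> 'e::ab_group_add \<Rightarrow> 'e) \<Rightarrow> ('e \<Rightarrow> real) set \<Rightarrow> bool" where
  "lcHs sm P \<longleftrightarrow> module sm
     \<and> (\<forall>p\<in>P. \<forall>x y. p (x + y) \<le> p x + p y)
     \<and> (\<forall>p\<in>P. \<forall>c x. p (sm c x) = norm c * p x)
     \<and> (\<forall>x. x \<noteq> 0 \<longrightarrow> (\<exists>p\<in>P. p x \<noteq> 0))"

definition sn_Cauchy :: "('e::ab_group_add \<Rightarrow> real) set \<Rightarrow> (nat \<Rightarrow> 'e) \<Rightarrow> bool" where
  "sn_Cauchy P X \<longleftrightarrow> (\<forall>p\<in>P. \<forall>e>0. \<exists>N. \<forall>m\<ge>N. \<forall>n\<ge>N. p (X m - X n) < e)"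

end

theory Submission
  imports Defs
begin

lemma dual_comb:
  fixes X :: "('a \<Rightarrow> 'k::real_normed_field) set" and Q y1 y2 and c :: 'k
  assumes nn: "\<And>q f. q \<in> Q \<Longrightarrow> f \<in> X \<Longrightarrow> q f \<ge> 0"
    and y1: "y1 \<in> fv_dual X Q" and y2: "y2 \<in> fv_dual X Q"
  shows "(\<lambda>f. y1 f + c * y2 f) \<in> fv_dual X Q"
proof -
  from y1 obtain F1 C1 where F1: "finite F1" "F1 \<subseteq> Q" "C1 \<ge> 0"
     "\<And>f. f\<in>X \<Longrightarrow> norm (y1 f) \<le> C1 * (\<Sum>p\<in>F1. p f)"
    unfolding fv_dual_def sn_cont_def by auto
  from y2 obtain F2 C2 where F2: "finite F2" "F2 \<subseteq> Q" "C2 \<ge> 0"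
     "\<And>f. f\<in>X \<Longrightarrow> norm (y2 f) \<le> C2 * (\<Sum>p\<in>F2. p f)"
    unfolding fv_dual_def sn_cont_def by auto
  have h4: "sn_cont X Q {norm} (\<lambda>f. y1 f + c * y2 f)"
    unfolding sn_cont_def
  proof (intro ballI exI conjI)
    show "finite (F1 \<union> F2)" using F1 F2 by auto
    show "F1 \<union> F2 \<subseteq> Q" using F1 F2 by auto
    show "C1 + norm c * C2 \<ge> 0" using F1 F2 by simp
    fix q :: "'k \<Rightarrow> real" and f assume q: "q \<in> {norm}" and f: "f \<in> X"
    have s1: "(\<Sum>p\<in>F1. p f) \<le> (\<Sum>p\<in>F1 \<union> F2. p f)"
      by (rule sum_mono2) (use F1 F2 nn f in auto)
    have s2: "(\<Sum>p\<in>F2. p f) \<le> (\<Sum>p\<in>F1 \<union> F2. p f)"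
      by (rule sum_mono2) (use F1 F2 nn f in auto)
    have "norm (y1 f + c * y2 f) \<le> norm (y1 f) + norm c * norm (y2 f)"
      by (metis norm_mult norm_triangle_ineq)
    also have "\<dots> \<le> C1 * (\<Sum>p\<in>F1. p f) + norm c * (C2 * (\<Sum>p\<in>F2. p f))"
      using F1(4)[OF f] F2(4)[OF f] by (simp add: add_mono mult_left_mono)
    also have "\<dots> \<le> C1 * (\<Sum>p\<in>F1 \<union> F2. p f) + norm c * (C2 * (\<Sum>p\<in>F1 \<union> F2. p f))"
      using s1 s2 F1(3) F2(3) by (intro add_mono mult_left_mono) auto
    also have "\<dots> = (C1 + norm c * C2) * (\<Sum>p\<in>F1 \<union> F2. p f)" by (simp add: algebra_simps)
    finally show "q (y1 f + c * y2 f) \<le> (C1 + norm c * C2) * (\<Sum>p\<in>F1 \<union> F2. p f)" using q by simp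
  qed
  have h1: "\<forall>f. f \<notin> X \<longrightarrow> y1 f + c * y2 f = 0" using y1 y2 unfolding fv_dual_def by auto
  have h2: "\<forall>f\<in>X. \<forall>g\<in>X. y1 (\<lambda>x. f x + g x) + c * y2 (\<lambda>x. f x + g x) = (y1 f + c * y2 f) + (y1 g + c * y2 g)"
    using y1 y2 unfolding fv_dual_def by (auto simp: algebra_simps)
  have h3: "\<forall>a. \<forall>f\<in>X. y1 (\<lambda>x. a * f x) + c * y2 (\<lambda>x. a * f x) = a * (y1 f + c * y2 f)"
    using y1 y2 unfolding fv_dual_def by (auto simp: algebra_simps)
  show ?thesis unfolding fv_dual_def by (intro CollectI conjI, fact h1, fact h2, fact h3, fact h4)
qed

theorem proposition4p4:
  fixes sm :: "'k::real_normed_field \<Rightarrow> 'e::ab_group_add \<Rightarrow> 'e"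
    and P :: "('e \<Rightarrow> real) set"
    and AP :: "('a::metric_space \<Rightarrow> 'k) set"
    and domT :: "'m \<Rightarrow> ('a \<Rightarrow> 'k) set"
    and T :: "'m \<Rightarrow> ('a \<Rightarrow> 'k) \<Rightarrow> 'w \<Rightarrow> 'k"
    and \<omega> :: "'m \<Rightarrow> 'w set"
    and \<nu> :: "'j \<Rightarrow> 'm \<Rightarrow> 'w \<Rightarrow> real"
    and u :: "(('a \<Rightarrow> 'k) \<Rightarrow> 'k) \<Rightarrow> 'e"
  defines "FVO \<equiv> FV AP domT T \<omega> \<nu>"
    and "Qs \<equiv> fv_seminorms T \<omega> \<nu>"
  assumes E_lcHs: "lcHs sm P"
    and E_nontrivial: "\<exists>x::'e. x \<noteq> 0"
    and \<omega>_ne: "\<And>m. \<omega> m \<noteq> {}"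
    and \<nu>_nonneg: "\<And>j m x. \<nu> j m x \<ge> 0"
    and \<nu>_pos: "\<And>m x. x \<in> \<omega> m \<Longrightarrow> \<exists>j. \<nu> j m x > 0"
    and AP_sub: "lin_subspace AP"
    and domT_sub: "\<And>m. lin_subspace (domT m)"
    and T_lin: "\<And>m. lin_map_on (domT m) (T m)"
    and dom_hausdorff: "\<And>f. f \<in> FVO \<Longrightarrow> f \<noteq> (\<lambda>x. 0) \<Longrightarrow> \<exists>j m. fv_seminorm T \<omega> \<nu> j m f \<noteq> 0"
    and dom_directed: "\<And>j1 m1 j2 m2. \<exists>j m C. \<forall>f\<in>FVO.
          max (fv_seminorm T \<omega> \<nu> j1 m1 f) (fv_seminorm T \<omega> \<nu> j2 m2 f) \<le> C * fv_seminorm T \<omega> \<nu> j m f"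
    and dom_delta: "\<And>x. point_eval FVO x \<in> fv_dual FVO Qs"
    and FV_CC: "\<And>f X. f \<in> FVO \<Longrightarrow> Cauchy X \<Longrightarrow> Cauchy (\<lambda>n. f (X n))"
    and delta_CC: "\<And>X. Cauchy X \<Longrightarrow> fun_sn_Cauchy (kappa_seminorms FVO Qs) (\<lambda>n. point_eval FVO (X n))"
    and u_add: "\<And>y1 y2. y1 \<in> fv_dual FVO Qs \<Longrightarrow> y2 \<in> fv_dual FVO Qs \<Longrightarrow>
          u (\<lambda>f. y1 f + y2 f) = u y1 + u y2"
    and u_scale: "\<And>c y. y \<in> fv_dual FVO Qs \<Longrightarrow> u (\<lambda>f. c * y f) = sm c (u y)"
    and u_cont: "sn_cont (fv_dual FVO Qs) (kappa_seminorms FVO Qs) P u"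
  shows "\<forall>X. Cauchy X \<longrightarrow> sn_Cauchy P (\<lambda>n. u (point_eval FVO (X n)))"
proof (intro allI impI)
  fix X :: "nat \<Rightarrow> 'a" assume X: "Cauchy X"
  let ?d = "\<lambda>n. point_eval FVO (X n)"
  have nn: "\<And>q f. q \<in> Qs \<Longrightarrow> f \<in> FVO \<Longrightarrow> q f \<ge> 0"
  proof -
    fix q f assume q: "q \<in> Qs" and f: "f \<in> FVO"
    then obtain j m where qd: "q = fv_seminorm T \<omega> \<nu> j m" unfolding Qs_def fv_seminorms_def by auto
    obtain x where x: "x \<in> \<omega> m" using \<omega>_ne by blast
    have bdd: "bdd_above ((\<lambda>x. norm (T m f x) * \<nu> j m x) ` \<omega> m)" using f unfolding FVO_def FV_def by auto
    have "0 \<le> norm (T m f x) * \<nu> j m x" using \<nu>_nonneg by simp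
    also have "\<dots> \<le> q f" unfolding qd fv_seminorm_def by (rule cSUP_upper[OF x bdd])
    finally show "q f \<ge> 0" .
  qed
  have mod: "module sm" using E_lcHs unfolding lcHs_def by auto
  have diff: "u (?d m) - u (?d n) = u (\<lambda>f. ?d m f + (-1) * ?d n f)" for m n
  proof -
    have "(\<lambda>f. (-1) * ?d n f) \<in> fv_dual FVO Qs"
    proof -
      have "(\<lambda>f. ?d n f + (-2) * ?d n f) \<in> fv_dual FVO Qs"
        by (rule dual_comb[where Q=Qs and X=FVO], rule nn, assumption+, rule dom_delta, rule dom_delta)
      moreover have "(\<lambda>f. ?d n f + (-2) * ?d n f) = (\<lambda>f. (-1) * ?d n f)"
        by (rule ext) (simp add: algebra_simps)
      ultimately show ?thesis by simp
    qed
    hence "u (\<lambda>f. ?d m f + (-1) * ?d n f) = u (?d m) + u (\<lambda>f. (-1) * ?d n f)"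
      using u_add dom_delta by blast
    also have "u (\<lambda>f. (-1) * ?d n f) = sm (-1) (u (?d n))" using u_scale dom_delta by blast
    also have "\<dots> = - u (?d n)" using module.scale_minus_left[OF mod, of 1] module.scale_one[OF mod] by simp
    finally show ?thesis by simp
  qed
  show "sn_Cauchy P (\<lambda>n. u (?d n))"
    unfolding sn_Cauchy_def
  proof (intro ballI allI impI)
    fix p e assume p: "p \<in> P" and e: "(0::real) < e"
    have "\<exists>F C. finite F \<and> F \<subseteq> kappa_seminorms FVO Qs \<and> C \<ge> 0
      \<and> (\<forall>y\<in>fv_dual FVO Qs. p (u y) \<le> C * (\<Sum>q\<in>F. q y))"
      using u_cont p unfolding sn_cont_def by (rule bspec)
    then obtain F C where F0: "finite F" "F \<subseteq> kappa_seminorms FVO Qs" "C \<ge> 0"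
      "\<forall>y\<in>fv_dual FVO Qs. p (u y) \<le> C * (\<Sum>q\<in>F. q y)"
      by (elim exE conjE) (rule that)
    have F: "finite F" "F \<subseteq> kappa_seminorms FVO Qs" "C \<ge> 0"
      "\<And>y. y \<in> fv_dual FVO Qs \<Longrightarrow> p (u y) \<le> C * (\<Sum>q\<in>F. q y)"
      using F0 by auto
    define e' where "e' = e / ((C + 1) * (real (card F) + 1))"
    have e': "e' > 0" using e F(3) unfolding e'_def by auto
    have dc: "\<forall>q\<in>kappa_seminorms FVO Qs. \<forall>e>0. \<exists>N. \<forall>m\<ge>N. \<forall>n\<ge>N. q (\<lambda>f. ?d m f - ?d n f) < e"
      using delta_CC[OF X] unfolding fun_sn_Cauchy_def .
    have "\<forall>q\<in>F. \<exists>N. \<forall>m\<ge>N. \<forall>n\<ge>N. q (\<lambda>f. ?d m f - ?d n f) < e'"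
    proof
      fix q assume "q \<in> F"
      hence "q \<in> kappa_seminorms FVO Qs" using F(2) by (rule subsetD[rotated])
      thus "\<exists>N. \<forall>m\<ge>N. \<forall>n\<ge>N. q (\<lambda>f. ?d m f - ?d n f) < e'" using dc e' by blast
    qed
    then obtain Nf where Nf0: "\<forall>q\<in>F. \<forall>m\<ge>Nf q. \<forall>n\<ge>Nf q. q (\<lambda>f. ?d m f - ?d n f) < e'"
      by (rule bchoice[THEN exE]) blast
    have Nf: "\<And>q m n. q \<in> F \<Longrightarrow> m \<ge> Nf q \<Longrightarrow> n \<ge> Nf q \<Longrightarrow> q (\<lambda>f. ?d m f - ?d n f) < e'"
      using Nf0 by blast
    show "\<exists>N. \<forall>m\<ge>N. \<forall>n\<ge>N. p (u (?d m) - u (?d n)) < e"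
    proof (intro exI allI impI)
      fix m n assume m: "m \<ge> sum Nf F" and n: "n \<ge> sum Nf F"
      have le: "\<And>q. q \<in> F \<Longrightarrow> Nf q \<le> sum Nf F" using F(1) by (simp add: member_le_sum)
      have mem: "(\<lambda>f. ?d m f + (-1) * ?d n f) \<in> fv_dual FVO Qs"
        by (rule dual_comb[where Q=Qs and X=FVO], rule nn, assumption+, rule dom_delta, rule dom_delta)
      have eq: "(\<lambda>f. ?d m f + (-1) * ?d n f) = (\<lambda>f. ?d m f - ?d n f)" by auto
      have "(\<Sum>q\<in>F. q (\<lambda>f. ?d m f - ?d n f)) \<le> (\<Sum>q\<in>F. e')"
        by (rule sum_mono, rule less_imp_le, rule Nf) (use le m n in \<open>meson order_trans\<close>)+
      hence S: "(\<Sum>q\<in>F. q (\<lambda>f. ?d m f - ?d n f)) \<le> real (card F) * e'" by simp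
      have "p (u (?d m) - u (?d n)) \<le> C * (\<Sum>q\<in>F. q (\<lambda>f. ?d m f - ?d n f))"
        using F(4)[OF mem] unfolding diff[of m n] eq .
      also have "\<dots> \<le> C * (real (card F) * e')" using S F(3) by (rule mult_left_mono)
      also have "\<dots> < e"
      proof -
        have ex: "(C + 1) * (real (card F) + 1) = C * real (card F) + (C + real (card F) + 1)"
          by (simp add: algebra_simps)
        have "C * real (card F) < (C + 1) * (real (card F) + 1)" unfolding ex using F(3) by simp
        hence "C * real (card F) * e' < (C + 1) * (real (card F) + 1) * e'" using e' by simp
        also have "\<dots> = e"
        proof -
          have pos: "(C + 1) * (real (card F) + 1) \<noteq> 0" using F(3) by (simp add: add_nonneg_eq_0_iff)
          show ?thesis unfolding e'_def using pos by simp
        qed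
        finally show ?thesis by (simp add: mult.assoc)
      qed
      finally show "p (u (?d m) - u (?d n)) < e" .
    qed
  qed
qed

end
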